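(* Let $G$ be a group with a regular gliding system such that there is an upper bound on the cardinality of sets of pairwise independent glides, and suppose $G$ (as a subset of itself) is oriented. Then for every $A\in G$ the typing homomorphism $\mu_A:\pi_1(X_G,A)\to\mathcal{A}(G)$ is injective.
   Context: Gliding system $(\mathcal{G},\mathcal{I})$ in $G$: $\mathcal{G}\subset G\setminus\{1\}$ closed under inversion (glides), $\mathcal{I}\subset\mathcal{G}\times\mathcal{G}$ (independence) with $(s^{-1},t),(t,s)\in\mathcal{I}$ and $st=ts\ne1$ whenever $(s,t)\in\mathcal{I}$; regular if every finite set of pairwise independent glides $S$ is cubic, i.e. $\prod_{t\in T_1}t\ne\prod_{t\in T_2}t$ for distinct $T_1,T_2\subset S$. Glide complex $X_G$: cubed complex with one $k$-cube for each equivalence class of based cubes $(A,S)$ ($A\in G$, $S$ cubic of size $k$) under $(A,S)\sim([T]A,(S\setminus T)\cup\{t^{-1}:t\in T\})$, where $[T]=\prod_{t\in T}t$; vertices $[T]A$, faces cubes of $(A,S')$, $S'\subset S$; 1-cells join $A$ and $sA$. $\mathcal{A}(G)$: right-angled Artin group with generators $g_s$ ($s\in\mathcal{G}$), relations $g_sg_t=g_tg_s$ for $(s,t)\in\mathcal{I}$. An orientation of $G$ directs every 1-cell of $X_G$ so that in every square with vertices $A,sA,tA,stA$ the 1-cells $A$–$sA$ and $tA$–$stA$ are both directed towards $sA,stA$ or both towards $A,tA$ (and likewise with $s,t$ exchanged). For a directed 1-cell $e$ from $A$ to $B$, $|e|=BA^{-1}$. For an edge path through $e_1,\dots,e_n$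 with $\nu_k=\pm1$ according to whether $e_k$ is traversed along or against its orientation, $\mu=g_{|e_1|}^{\nu_1}\cdots g_{|e_n|}^{\nu_n}$; on loops at $A$ this gives the typing homomorphism $\mu_A$. *)

theory Defs
  imports "HOL-Algebra.Group"
begin

definition pairwise_indep :: "'a set \<Rightarrow> ('a \<times> 'a) set \<Rightarrow> 'a set \<Rightarrow> bool" where
  "pairwise_indep Gl I S \<longleftrightarrow> S \<subseteq> Gl \<and> (\<forall>s\<in>S. \<forall>t\<in>S. s \<noteq> t \<longrightarrow> (s, t) \<in> I)"

text \<open>Product of a finite set of pairwise commuting elements (order irrelevant).\<close>
definition set_prod :: "('a, 'b) monoid_scheme \<Rightarrow> 'a set \<Rightarrow> 'a" where
  "set_prod G T = foldr (\<lambda>x y. x \<otimes>\<^bsub>G\<^esub> y) (SOME xs. distinct xs \<and> set xs = T) \<one>\<^bsub>G\<^esub>"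

definition cubic :: "('a, 'b) monoid_scheme \<Rightarrow> 'a set \<Rightarrow> bool" where
  "cubic G S \<longleftrightarrow> (\<forall>T1 T2. T1 \<subseteq> S \<longrightarrow> T2 \<subseteq> S \<longrightarrow> T1 \<noteq> T2 \<longrightarrow> set_prod G T1 \<noteq> set_prod G T2)"

definition gliding_system :: "('a, 'b) monoid_scheme \<Rightarrow> 'a set \<Rightarrow> ('a \<times> 'a) set \<Rightarrow> bool" where
  "gliding_system G Gl I \<longleftrightarrow>
     Gl \<subseteq> carrier G - {\<one>\<^bsub>G\<^esub>} \<and>
     (\<forall>s\<in>Gl. inv\<^bsub>G\<^esub> s \<in> Gl) \<and>
     I \<subseteq> Gl \<times> Gl \<and>
     (\<forall>(s, t)\<in>I. (inv\<^bsub>G\<^esub> s, t) \<in> I \<and> (t, s) \<in> I \<and>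
        s \<otimes>\<^bsub>G\<^esub> t = t \<otimes>\<^bsub>G\<^esub> s \<and> s \<otimes>\<^bsub>G\<^esub> t \<noteq> \<one>\<^bsub>G\<^esub>)"

definition regular_gliding :: "('a, 'b) monoid_scheme \<Rightarrow> 'a set \<Rightarrow> ('a \<times> 'a) set \<Rightarrow> bool" where
  "regular_gliding G Gl I \<longleftrightarrow> (\<forall>S. finite S \<longrightarrow> pairwise_indep Gl I S \<longrightarrow> cubic G S)"

text \<open>Vertices of X_G are the elements of G; A and B are joined by a (unique) 1-cell
  iff B A^{-1} is a glide.\<close>
definition adjacent :: "('a, 'b) monoid_scheme \<Rightarrow> 'a set \<Rightarrow> 'a \<Rightarrow> 'a \<Rightarrow> bool" where
  "adjacent G Gl A B \<longleftrightarrow> A \<in> carrier G \<and> B \<in> carrier G \<and> B \<otimes>\<^bsub>G\<^esub> inv\<^bsub>G\<^esub> A \<in> Gl"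

fun edge_path :: "('a, 'b) monoid_scheme \<Rightarrow> 'a set \<Rightarrow> 'a list \<Rightarrow> bool" where
  "edge_path G Gl [] = False"
| "edge_path G Gl [v] = (v \<in> carrier G)"
| "edge_path G Gl (v # w # vs) = (adjacent G Gl v w \<and> edge_path G Gl (w # vs))"

definition loop_at :: "('a, 'b) monoid_scheme \<Rightarrow> 'a set \<Rightarrow> 'a \<Rightarrow> 'a list \<Rightarrow> bool" where
  "loop_at G Gl A p \<longleftrightarrow> edge_path G Gl p \<and> hd p = A \<and> last p = A"

text \<open>Elementary homotopies: removing a backtrack, and pushing a path across a square
  (2-cube of a based cube (A,{s,t}) with s, t independent).\<close>
inductive path_move :: "('a, 'b) monoid_scheme \<Rightarrow> 'a set \<Rightarrow> ('a \<times> 'a) set \<Rightarrow> 'a list \<Rightarrow> 'a list \<Rightarrow> bool"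
  for G Gl I where
  backtrack: "adjacent G Gl v w \<Longrightarrow> path_move G Gl I (xs @ [v, w, v] @ ys) (xs @ [v] @ ys)"
| square: "A \<in> carrier G \<Longrightarrow> (s, t) \<in> I \<Longrightarrow> s \<noteq> t \<Longrightarrow>
    path_move G Gl I (xs @ [A, s \<otimes>\<^bsub>G\<^esub> A, t \<otimes>\<^bsub>G\<^esub> (s \<otimes>\<^bsub>G\<^esub> A)] @ ys)
                     (xs @ [A, t \<otimes>\<^bsub>G\<^esub> A, s \<otimes>\<^bsub>G\<^esub> (t \<otimes>\<^bsub>G\<^esub> A)] @ ys)"

text \<open>Homotopy rel endpoints of edge paths in X_G (only the 2-skeleton matters for pi_1).\<close>
definition homotopic :: "('a, 'b) monoid_scheme \<Rightarrow> 'a set \<Rightarrow> ('a \<times> 'a) set \<Rightarrow> 'a list \<Rightarrow> 'a list \<Rightarrow> bool" where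
  "homotopic G Gl I = equivclp (path_move G Gl I)"

text \<open>Words in the generators g_s^{\<plusminus>1}: (s, True) is g_s, (s, False) is g_s^{-1}.\<close>
inductive raag_step :: "'a set \<Rightarrow> ('a \<times> 'a) set \<Rightarrow> ('a \<times> bool) list \<Rightarrow> ('a \<times> bool) list \<Rightarrow> bool"
  for Gl I where
  cancel: "s \<in> Gl \<Longrightarrow> raag_step Gl I (u @ [(s, b), (s, \<not> b)] @ v) (u @ v)"
| commute: "(s, t) \<in> I \<Longrightarrow> raag_step Gl I (u @ [(s, b), (t, c)] @ v) (u @ [(t, c), (s, b)] @ v)"

definition raag_eq :: "'a set \<Rightarrow> ('a \<times> 'a) set \<Rightarrow> ('a \<times> bool) list \<Rightarrow> ('a \<times> bool) list \<Rightarrow> bool" where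
  "raag_eq Gl I = equivclp (raag_step Gl I)"

text \<open>Ori is the set of directed 1-cells (A,B) (directed from A to B).\<close>
definition orientation :: "('a, 'b) monoid_scheme \<Rightarrow> 'a set \<Rightarrow> ('a \<times> 'a) set \<Rightarrow> ('a \<times> 'a) set \<Rightarrow> bool" where
  "orientation G Gl I Ori \<longleftrightarrow>
     (\<forall>(A, B)\<in>Ori. adjacent G Gl A B) \<and>
     (\<forall>A B. adjacent G Gl A B \<longrightarrow> ((A, B) \<in> Ori \<longleftrightarrow> (B, A) \<notin> Ori)) \<and>
     (\<forall>A\<in>carrier G. \<forall>(s, t)\<in>I. s \<noteq> t \<longrightarrow>
        ((A, s \<otimes>\<^bsub>G\<^esub> A) \<in> Ori \<longleftrightarrow> (t \<otimes>\<^bsub>G\<^esub> A, s \<otimes>\<^bsub>G\<^esub> (t \<otimes>\<^bsub>G\<^esub> A)) \<in> Ori))"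

text \<open>mu of an edge path: the letter g_{|e|}^{\<nu>} for each traversed 1-cell e, where
  |e| = B A^{-1} for e directed from A to B.\<close>
fun typing :: "('a, 'b) monoid_scheme \<Rightarrow> ('a \<times> 'a) set \<Rightarrow> 'a list \<Rightarrow> ('a \<times> bool) list" where
  "typing G Ori (v # w # vs) =
     (if (v, w) \<in> Ori then (w \<otimes>\<^bsub>G\<^esub> inv\<^bsub>G\<^esub> v, True) else (v \<otimes>\<^bsub>G\<^esub> inv\<^bsub>G\<^esub> w, False))
     # typing G Ori (w # vs)"
| "typing G Ori _ = []"

end

theory Submission
  imports Defs
begin


definition CC :: "('a \<times> 'a) set \<Rightarrow> ('a \<times> bool) \<Rightarrow> ('a \<times> bool) \<Rightarrow> bool" where
  "CC I x y \<longleftrightarrow> (fst x, fst y) \<in> I"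

definition linv :: "('a \<times> bool) \<Rightarrow> ('a \<times> bool)" where
  "linv x = (fst x, \<not> snd x)"

fun red1 :: "('a \<times> 'a) set \<Rightarrow> ('a \<times> bool) \<Rightarrow> ('a \<times> bool) list \<Rightarrow> ('a \<times> bool) list option" where
  "red1 I a [] = None"
| "red1 I a (x # w) = (if x = linv a then Some w else if CC I a x then map_option (Cons x) (red1 I a w) else None)"

definition ff :: "('a \<times> 'a) set \<Rightarrow> ('a \<times> bool) \<Rightarrow> ('a \<times> bool) list \<Rightarrow> ('a \<times> bool) list" where
  "ff I a w = (case red1 I a w of None \<Rightarrow> a # w | Some r \<Rightarrow> r)"

definition Phi :: "('a \<times> 'a) set \<Rightarrow> ('a \<times> bool) list \<Rightarrow> ('a \<times> bool) list" where
  "Phi I w = foldr (ff I) w []"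

inductive swap1 :: "('a \<times> 'a) set \<Rightarrow> ('a \<times> bool) list \<Rightarrow> ('a \<times> bool) list \<Rightarrow> bool" for I where
  "CC I x y \<Longrightarrow> swap1 I (u @ [x, y] @ v) (u @ [y, x] @ v)"

fun reduced :: "('a \<times> 'a) set \<Rightarrow> ('a \<times> bool) list \<Rightarrow> bool" where
  "reduced I [] = True"
| "reduced I (x # w) = (reduced I w \<and> red1 I x w = None)"

lemma linv_linv[simp]: "linv (linv a) = a" by (simp add: linv_def)
lemma fst_linv[simp]: "fst (linv a) = fst a" by (simp add: linv_def)
lemma linv_neq[simp]: "linv a \<noteq> a" by (simp add: linv_def prod_eq_iff)

lemma swap1_Cons: "swap1 I w w' \<Longrightarrow> swap1 I (z # w) (z # w')"
  by (induction rule: swap1.induct) (metis append_Cons swap1.intros)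

lemma swap1_sym: "swap1 I w w' \<Longrightarrow> (\<And>s t. (s,t) \<in> I \<Longrightarrow> (t,s) \<in> I) \<Longrightarrow> swap1 I w' w"
  by (induction rule: swap1.induct) (metis CC_def swap1.intros)

locale indep =
  fixes I :: "('a \<times> 'a) set"
  assumes irr: "(s, s) \<notin> I" and symI: "(s, t) \<in> I \<Longrightarrow> (t, s) \<in> I"
begin

lemma CC_sym: "CC I x y \<Longrightarrow> CC I y x" using symI by (auto simp: CC_def)
lemma CC_irr: "CC I x y \<Longrightarrow> fst x \<noteq> fst y" using irr by (auto simp: CC_def)
lemma CC_linv1[simp]: "CC I (linv x) y = CC I x y" by (simp add: CC_def)
lemma CC_linv2[simp]: "CC I x (linv y) = CC I x y" by (simp add: CC_def)

lemma red1_Some: "red1 I a w = Some r \<longleftrightarrow> (\<exists>u v. w = u @ [linv a] @ v \<and> (\<forall>x\<in>set u. CC I a x) \<and> r = u @ v)"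
proof
  assume "red1 I a w = Some r" then show "\<exists>u v. w = u @ [linv a] @ v \<and> (\<forall>x\<in>set u. CC I a x) \<and> r = u @ v"
  proof (induction w arbitrary: r)
    case Nil then show ?case by simp
  next
    case (Cons x w)
    show ?case
    proof (cases "x = linv a")
      case True then show ?thesis using Cons.prems by (intro exI[of _ "[]"] exI[of _ w]) auto
    next
      case False
      with Cons.prems have c: "CC I a x" and "map_option (Cons x) (red1 I a w) = Some r"
        by (auto split: if_splits)
      then obtain r' where "red1 I a w = Some r'" "r = x # r'" by auto
      with Cons.IH obtain u v where "w = u @ [linv a] @ v" "\<forall>x\<in>set u. CC I a x" "r' = u @ v" by blast
      then show ?thesis using c \<open>r = x # r'\<close> by (intro exI[of _ "x # u"] exI[of _ v]) auto
    qed
  qed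
next
  assume "\<exists>u v. w = u @ [linv a] @ v \<and> (\<forall>x\<in>set u. CC I a x) \<and> r = u @ v"
  then obtain u v where h: "w = u @ [linv a] @ v" "\<forall>x\<in>set u. CC I a x" "r = u @ v" by blast
  then show "red1 I a w = Some r"
  proof (induction u arbitrary: w r)
    case Nil then show ?case by simp
  next
    case (Cons y u)
    have "CC I a y" using Cons.prems by auto
    then have "y \<noteq> linv a" using CC_irr by (metis fst_linv)
    then show ?case using Cons \<open>CC I a y\<close> by auto
  qed
qed

lemma red1_None: "red1 I a w = None \<longleftrightarrow> \<not> (\<exists>u v. w = u @ [linv a] @ v \<and> (\<forall>x\<in>set u. CC I a x))"
proof -
  have "red1 I a w \<noteq> None \<longleftrightarrow> (\<exists>r. red1 I a w = Some r)" by auto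
  also have "\<dots> \<longleftrightarrow> (\<exists>u v. w = u @ [linv a] @ v \<and> (\<forall>x\<in>set u. CC I a x))"
    using red1_Some by blast
  finally show ?thesis by blast
qed

lemma split_one: "u @ v = m @ [c] @ v2 \<Longrightarrow>
  (\<exists>u2. u = m @ [c] @ u2 \<and> v2 = u2 @ v) \<or> (\<exists>m2. m = u @ m2 \<and> v = m2 @ [c] @ v2)"
proof (induction u arbitrary: m)
  case Nil then show ?case by simp
next
  case (Cons x u)
  then show ?case by (cases m) auto
qed

lemma swap1_sym': "swap1 I w w' \<Longrightarrow> swap1 I w' w"
  using swap1_sym symI by blast

lemma red1_swap:
  assumes "swap1 I w w'"
  shows "(red1 I a w = None \<and> red1 I a w' = None) \<or>
         (\<exists>r r'. red1 I a w = Some r \<and> red1 I a w' = Some r' \<and> (r = r' \<or> swap1 I r r'))"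
  using assms
proof (induction rule: swap1.induct)
  case (1 x y u v)
  then show ?case
  proof (induction u)
    case Nil
    have xy: "fst x \<noteq> fst y" using CC_irr[OF Nil] .
    show ?case
    proof (cases "x = linv a")
      case True
      then have "y \<noteq> linv a" "CC I a y" using xy Nil by (auto simp: CC_def)
      then show ?thesis using True by auto
    next
      case False
      show ?thesis
      proof (cases "y = linv a")
        case True
        then have "CC I a x" using xy Nil CC_sym by (auto simp: CC_def)
        then show ?thesis using True False by auto
      next
        case False2: False
        show ?thesis
        proof (cases "CC I a x \<and> CC I a y")
          case True
          then show ?thesis using False False2 Nil
            by (cases "red1 I a v") (auto intro: swap1.intros[of _ _ _ "[]", simplified])
        qed (use False False2 in auto)
      qed
    qed
  next
    case (Cons z u)
    have sw: "swap1 I (u @ [x, y] @ v) (u @ [y, x] @ v)" using Cons.prems by (rule swap1.intros)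
    show ?case
    proof (cases "z = linv a")
      case True then show ?thesis using sw by simp
    next
      case False
      show ?thesis
      proof (cases "CC I a z")
        case True
        from Cons.IH[OF Cons.prems] show ?thesis
        proof
          assume "red1 I a (u @ [x, y] @ v) = None \<and> red1 I a (u @ [y, x] @ v) = None"
          then show ?thesis using False True by simp
        next
          assume "\<exists>r r'. red1 I a (u @ [x, y] @ v) = Some r \<and> red1 I a (u @ [y, x] @ v) = Some r' \<and> (r = r' \<or> swap1 I r r')"
          then obtain r r' where "red1 I a (u @ [x, y] @ v) = Some r" "red1 I a (u @ [y, x] @ v) = Some r'" "r = r' \<or> swap1 I r r'"
            by blast
          then show ?thesis using False True by (auto intro: swap1_Cons)
        qed
      qed (use False in simp)
    qed
  qed
qed

lemma ff_swap: "swap1 I w w' \<Longrightarrow> equivclp (swap1 I) (ff I a w) (ff I a w')"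
  using red1_swap[of w w' a]
  by (auto simp: ff_def split: option.splits intro: r_into_equivclp swap1_Cons)

lemma ff_eqv: "equivclp (swap1 I) w w' \<Longrightarrow> equivclp (swap1 I) (ff I a w) (ff I a w')"
proof (induction rule: equivclp_induct)
  case base then show ?case by simp
next
  case (step y z)
  then show ?case using ff_swap equivclp_trans equivclp_sym by metis
qed

lemma foldr_eqv: "equivclp (swap1 I) z z' \<Longrightarrow> equivclp (swap1 I) (foldr (ff I) u z) (foldr (ff I) u z')"
  by (induction u) (auto intro: ff_eqv)

lemma reduced_append: "reduced I (u @ w) \<Longrightarrow> reduced I w"
  by (induction u) auto

lemma reduced_del:
  assumes "reduced I (u @ [b] @ v)" "\<forall>x\<in>set u. CC I b x"
  shows "reduced I (u @ v)"
  using assms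
proof (induction u)
  case Nil then show ?case by simp
next
  case (Cons y u)
  have IH: "reduced I (u @ v)" using Cons by auto
  have n: "red1 I y (u @ [b] @ v) = None" using Cons.prems by simp
  have cyb: "CC I y b" using Cons.prems CC_sym by auto
  have "red1 I y (u @ v) = None"
  proof (rule ccontr)
    assume "red1 I y (u @ v) \<noteq> None"
    then obtain m v2 where mv: "u @ v = m @ [linv y] @ v2" "\<forall>x\<in>set m. CC I y x"
      using red1_Some by (cases "red1 I y (u @ v)") blast+
    show False
    proof (cases "length m < length u")
      case True
      then obtain u2 where "u = m @ [linv y] @ u2" using split_one[OF mv(1)] by auto
      then have "u @ [b] @ v = m @ [linv y] @ (u2 @ [b] @ v)" by simp
      then show False using n mv(2) red1_None by blast
    next
      case False
      then obtain m2 where "m = u @ m2" "v = m2 @ [linv y] @ v2" using split_one[OF mv(1)] by auto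
      then have "u @ [b] @ v = (u @ [b] @ m2) @ [linv y] @ v2" by simp
      moreover have "\<forall>x\<in>set (u @ [b] @ m2). CC I y x" using mv(2) cyb \<open>m = u @ m2\<close> by auto
      ultimately show False using n red1_None by blast
    qed
  qed
  then show ?case using IH by simp
qed

lemma reduced_ff: "reduced I w \<Longrightarrow> reduced I (ff I a w)"
proof (cases "red1 I a w")
  case None
  assume "reduced I w" then show ?thesis using None by (simp add: ff_def)
next
  case (Some r)
  assume "reduced I w"
  then obtain u v where "w = u @ [linv a] @ v" "\<forall>x\<in>set u. CC I a x" "r = u @ v"
    using Some red1_Some by blast
  then show ?thesis using Some reduced_del[of u "linv a" v] \<open>reduced I w\<close> by (simp add: ff_def)
qed

lemma reduced_Phi: "reduced I (foldr (ff I) w [])"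
  by (induction w) (auto intro: reduced_ff)

lemma eqv_Cons: "equivclp (swap1 I) w w' \<Longrightarrow> equivclp (swap1 I) (z # w) (z # w')"
proof (induction rule: equivclp_induct)
  case base then show ?case by simp
next
  case (step y z')
  then show ?case using swap1_Cons equivclp_into_equivclp by metis
qed

lemma move_front: "\<forall>x\<in>set u. CC I b x \<Longrightarrow> equivclp (swap1 I) (u @ [b] @ v) (b # u @ v)"
proof (induction u)
  case Nil then show ?case by simp
next
  case (Cons y u)
  have "equivclp (swap1 I) (y # u @ [b] @ v) (y # b # u @ v)"
    using Cons by (auto intro: eqv_Cons)
  moreover have "swap1 I (y # b # u @ v) (b # y # u @ v)"
    using Cons.prems CC_sym swap1.intros[of I y b "[]" "u @ v"] by auto
  ultimately show ?case using equivclp_into_equivclp by fastforce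
qed

lemma two_split: "u @ [a] @ v = u' @ [b] @ v' \<Longrightarrow> a \<noteq> b \<Longrightarrow>
   (\<exists>m. u' = u @ [a] @ m \<and> v = m @ [b] @ v') \<or> (\<exists>m. u = u' @ [b] @ m \<and> v' = m @ [a] @ v)"
proof (induction u arbitrary: u')
  case Nil then show ?case by (cases u') auto
next
  case (Cons x u)
  then show ?case by (cases u') auto
qed

lemma ff_inv: "reduced I w \<Longrightarrow> equivclp (swap1 I) (ff I (linv a) (ff I a w)) w"
proof (cases "red1 I a w")
  case None
  then show ?thesis by (simp add: ff_def)
next
  case (Some r)
  assume red: "reduced I w"
  then obtain u v where uv: "w = u @ [linv a] @ v" "\<forall>x\<in>set u. CC I a x" "r = u @ v"
    using Some red1_Some by blast
  have "red1 I (linv a) (u @ v) = None"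
  proof (rule ccontr)
    assume "red1 I (linv a) (u @ v) \<noteq> None"
    then obtain m v2 where mv: "u @ v = m @ [a] @ v2" "\<forall>x\<in>set m. CC I a x"
      using red1_Some[of "linv a"] by (cases "red1 I (linv a) (u @ v)") auto
    show False
    proof (cases "length m < length u")
      case True
      then have "a \<in> set u" using split_one[OF mv(1)] by auto
      then show False using uv(2) CC_irr by blast
    next
      case False
      then obtain m2 where "m = u @ m2" "v = m2 @ [a] @ v2" using split_one[OF mv(1)] by auto
      then have "reduced I (linv a # m2 @ [a] @ v2)" using red uv(1) reduced_append[of u "linv a # m2 @ [a] @ v2"] by simp
      then have "red1 I (linv a) (m2 @ [a] @ v2) = None" by simp
      moreover have "\<forall>x\<in>set m2. CC I (linv a) x" using mv(2) \<open>m = u @ m2\<close> by auto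
      ultimately show False using red1_None[of "linv a"] by fastforce
    qed
  qed
  then have "ff I (linv a) (ff I a w) = linv a # u @ v" using Some uv by (simp add: ff_def)
  moreover have "equivclp (swap1 I) (u @ [linv a] @ v) (linv a # u @ v)"
    using move_front uv(2) by simp
  ultimately show ?thesis using uv(1) equivclp_sym by metis
qed

lemma ff_comm_some:
  assumes c: "CC I x y" and s: "red1 I y z = Some r"
  shows "ff I x (ff I y z) = ff I y (ff I x z)"
proof -
  obtain u v where uv: "z = u @ [linv y] @ v" "\<forall>w\<in>set u. CC I y w" "r = u @ v"
    using s red1_Some by blast
  have xy: "fst x \<noteq> fst y" using CC_irr[OF c] .
  have ffy: "ff I y z = u @ v" using s uv by (simp add: ff_def)
  show ?thesis
  proof (cases "red1 I x z")
    case None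
    have "red1 I x (u @ v) = None"
    proof (rule ccontr)
      assume "red1 I x (u @ v) \<noteq> None"
      then obtain m v2 where mv: "u @ v = m @ [linv x] @ v2" "\<forall>w\<in>set m. CC I x w"
        using red1_Some by (cases "red1 I x (u @ v)") blast+
      show False
      proof (cases "length m < length u")
        case True
        then obtain u2 where "u = m @ [linv x] @ u2" using split_one[OF mv(1)] by auto
        then have "z = m @ [linv x] @ (u2 @ [linv y] @ v)" using uv by simp
        then show False using None mv(2) red1_None by blast
      next
        case False
        then obtain m2 where "m = u @ m2" "v = m2 @ [linv x] @ v2" using split_one[OF mv(1)] by auto
        then have "z = (u @ [linv y] @ m2) @ [linv x] @ v2" using uv by simp
        moreover have "\<forall>w\<in>set (u @ [linv y] @ m2). CC I x w" using mv(2) c \<open>m = u @ m2\<close> by auto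
        ultimately show False using None red1_None by blast
      qed
    qed
    then have l: "ff I x (ff I y z) = x # u @ v" using ffy by (simp add: ff_def)
    have "x \<noteq> linv y" using xy by auto
    then have "red1 I y (x # z) = Some (x # u @ v)" using s uv CC_sym[OF c] by simp
    then have "ff I y (ff I x z) = x # u @ v" using None by (simp add: ff_def)
    then show ?thesis using l by simp
  next
    case (Some r')
    then obtain u' v' where uv': "z = u' @ [linv x] @ v'" "\<forall>w\<in>set u'. CC I x w" "r' = u' @ v'"
      using red1_Some by blast
    have ffx: "ff I x z = u' @ v'" using Some uv' by (simp add: ff_def)
    have ne: "linv y \<noteq> linv x" using xy by (metis fst_linv)
    from two_split[OF _ ne, of u v u' v'] uv(1) uv'(1)
    consider (a) m where "u' = u @ [linv y] @ m" "v = m @ [linv x] @ v'"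
      | (b) m where "u = u' @ [linv x] @ m" "v' = m @ [linv y] @ v" by auto
    then show ?thesis
    proof cases
      case a
      have "red1 I x (u @ v) = Some (u @ m @ v')"
        using a uv'(2) by (subst red1_Some) (rule exI[of _ "u @ m"], auto)
      moreover have "red1 I y (u' @ v') = Some (u @ m @ v')"
        using a uv(2) by (subst red1_Some) (rule exI[of _ "u"], auto)
      ultimately show ?thesis using ffx ffy by (simp add: ff_def)
    next
      case b
      have "red1 I x (u @ v) = Some (u' @ m @ v)"
        using b uv'(2) by (subst red1_Some) (rule exI[of _ "u'"], auto)
      moreover have "red1 I y (u' @ v') = Some (u' @ m @ v)"
        using b uv(2) by (subst red1_Some) (rule exI[of _ "u' @ m"], auto)
      ultimately show ?thesis using ffx ffy by (simp add: ff_def)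
    qed
  qed
qed

lemma ff_comm:
  assumes c: "CC I x y"
  shows "equivclp (swap1 I) (ff I x (ff I y z)) (ff I y (ff I x z))"
proof (cases "red1 I y z")
  case (Some r) then show ?thesis using ff_comm_some[OF c] by simp
next
  case None
  show ?thesis
  proof (cases "red1 I x z")
    case (Some r) then show ?thesis using ff_comm_some[OF CC_sym[OF c]] by simp
  next
    case None2: None
    have xy: "fst x \<noteq> fst y" using CC_irr[OF c] .
    then have "y \<noteq> linv x" "x \<noteq> linv y" by auto
    then have "ff I x (ff I y z) = x # y # z" "ff I y (ff I x z) = y # x # z"
      using None None2 c CC_sym[OF c] by (auto simp: ff_def)
    moreover have "swap1 I (x # y # z) (y # x # z)" using swap1.intros[OF c, of "[]" z] by simp
    ultimately show ?thesis by auto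
  qed
qed

lemma Phi_step: "raag_step Gl I w w' \<Longrightarrow> equivclp (swap1 I) (Phi I w) (Phi I w')"
proof (induction rule: raag_step.induct)
  case (cancel s u b v)
  let ?x = "(s, b)"
  have "linv ?x = (s, \<not> b)" by (simp add: linv_def)
  have "equivclp (swap1 I) (ff I (linv (linv ?x)) (ff I (linv ?x) (Phi I v))) (Phi I v)"
    using ff_inv reduced_Phi unfolding Phi_def by blast
  then have "equivclp (swap1 I) (ff I ?x (ff I (s, \<not> b) (Phi I v))) (Phi I v)"
    by (simp add: linv_def)
  then show ?case unfolding Phi_def by (simp add: foldr_eqv)
next
  case (commute s t u b c v)
  have "CC I (s, b) (t, c)" using commute by (simp add: CC_def)
  from ff_comm[OF this] show ?case unfolding Phi_def by (simp add: foldr_eqv)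
qed

lemma Phi_eq: "raag_eq Gl I w w' \<Longrightarrow> equivclp (swap1 I) (Phi I w) (Phi I w')"
  unfolding raag_eq_def
proof (induction rule: equivclp_induct)
  case base then show ?case by simp
next
  case (step y z)
  then show ?case using Phi_step equivclp_trans equivclp_sym by metis
qed

end




definition lab :: "('a, 'b) monoid_scheme \<Rightarrow> ('a \<times> 'a) set \<Rightarrow> 'a \<Rightarrow> 'a \<Rightarrow> 'a \<times> bool" where
  "lab G Ori v w = (if (v, w) \<in> Ori then (w \<otimes>\<^bsub>G\<^esub> inv\<^bsub>G\<^esub> v, True) else (v \<otimes>\<^bsub>G\<^esub> inv\<^bsub>G\<^esub> w, False))"

lemma typing_Cons2: "typing G Ori (v # w # vs) = lab G Ori v w # typing G Ori (w # vs)"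
  by (simp add: lab_def)

declare typing.simps(1)[simp del] typing_Cons2[simp]

lemma typing_single[simp]: "typing G Ori [v] = []" by simp

lemma path_move_cong: "path_move G Gl I p q \<Longrightarrow> path_move G Gl I (zs @ p @ ws) (zs @ q @ ws)"
proof (induction rule: path_move.induct)
  case (backtrack v w xs ys)
  then show ?case using path_move.backtrack[where xs="zs @ xs" and ys="ys @ ws"] by simp
next
  case (square A s t xs ys)
  then show ?case using path_move.square[where xs="zs @ xs" and ys="ys @ ws"] by simp
qed

lemma homotopic_cong: "homotopic G Gl I p q \<Longrightarrow> homotopic G Gl I (zs @ p @ ws) (zs @ q @ ws)"
  unfolding homotopic_def
proof (induction rule: equivclp_induct)
  case base then show ?case by simp
next
  case (step y z)
  then have "path_move G Gl I (zs @ y @ ws) (zs @ z @ ws) \<or> path_move G Gl I (zs @ z @ ws) (zs @ y @ ws)"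
    using path_move_cong by blast
  then show ?case using step.IH by (rule equivclp_into_equivclp[rotated])
qed

lemma homotopic_Cons: "homotopic G Gl I p q \<Longrightarrow> homotopic G Gl I (z # p) (z # q)"
  using homotopic_cong[of G Gl I p q "[z]" "[]"] by simp

lemma homotopic_trans: "homotopic G Gl I p q \<Longrightarrow> homotopic G Gl I q r \<Longrightarrow> homotopic G Gl I p r"
  unfolding homotopic_def using equivclp_trans by metis

lemma homotopic_sym: "homotopic G Gl I p q \<Longrightarrow> homotopic G Gl I q p"
  unfolding homotopic_def using equivclp_sym by metis

lemma homotopic_move: "path_move G Gl I p q \<Longrightarrow> homotopic G Gl I p q"
  unfolding homotopic_def by blast

locale glide_ctx = group +
  fixes Gl :: "'a set" and I :: "('a \<times> 'a) set" and Ori :: "('a \<times> 'a) set"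
  assumes gs: "gliding_system G Gl I" and ori: "orientation G Gl I Ori"
begin

lemma Gl_carrier: "s \<in> Gl \<Longrightarrow> s \<in> carrier G" using gs unfolding gliding_system_def by auto
lemma Gl_inv: "s \<in> Gl \<Longrightarrow> inv s \<in> Gl" using gs unfolding gliding_system_def by auto
lemma I_Gl: "(s, t) \<in> I \<Longrightarrow> s \<in> Gl \<and> t \<in> Gl" using gs unfolding gliding_system_def by auto
lemma I_props: "(s, t) \<in> I \<Longrightarrow> (inv s, t) \<in> I \<and> (t, s) \<in> I \<and> s \<otimes> t = t \<otimes> s \<and> s \<otimes> t \<noteq> \<one>"
proof -
  assume a: "(s, t) \<in> I"
  have "\<forall>p\<in>I. case p of (s, t) \<Rightarrow> (inv s, t) \<in> I \<and> (t, s) \<in> I \<and> s \<otimes> t = t \<otimes> s \<and> s \<otimes> t \<noteq> \<one>"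
    using gs unfolding gliding_system_def by (elim conjE)
  from bspec[OF this a] show ?thesis unfolding case_prod_conv .
qed

lemma I_irr: "(s, s) \<notin> I"
proof
  assume "(s, s) \<in> I"
  then have "(inv s, s) \<in> I" "s \<in> carrier G" using I_props I_Gl Gl_carrier by blast+
  then show False using I_props[of "inv s" s] by simp
qed

lemma I_inv2: "(s, t) \<in> I \<Longrightarrow> (s, inv t) \<in> I"
  using I_props by blast

lemma indep_I: "indep I"
proof
  show "(s, s) \<notin> I" for s by (rule I_irr)
  show "(t, s) \<in> I" if "(s, t) \<in> I" for s t using I_props[OF that] by (elim conjE)
qed

lemma adj_sym: "adjacent G Gl v w \<Longrightarrow> adjacent G Gl w v"
proof -
  assume a: "adjacent G Gl v w"
  then have c: "v \<in> carrier G" "w \<in> carrier G" "w \<otimes> inv v \<in> Gl" unfolding adjacent_def by auto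
  then have "inv (w \<otimes> inv v) = v \<otimes> inv w" by (simp add: inv_mult_group)
  then show ?thesis using c Gl_inv[OF c(3)] unfolding adjacent_def by simp
qed

lemma adj_mul: "adjacent G Gl v w \<Longrightarrow> w = (w \<otimes> inv v) \<otimes> v"
  unfolding adjacent_def by (simp add: m_assoc)

lemma lab_mul: "a \<in> carrier G \<Longrightarrow> u \<in> carrier G \<Longrightarrow>
  lab G Ori u (a \<otimes> u) = (if (u, a \<otimes> u) \<in> Ori then (a, True) else (inv a, False))"
proof -
  assume c: "a \<in> carrier G" "u \<in> carrier G"
  have 1: "(a \<otimes> u) \<otimes> inv u = a" using c by (simp add: m_assoc)
  have 2: "u \<otimes> inv (a \<otimes> u) = inv a" using c by (simp add: inv_mult_group m_assoc[symmetric])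
  show ?thesis unfolding lab_def 1 2 by simp
qed

lemma ori_adj: "adjacent G Gl A B \<Longrightarrow> ((A, B) \<in> Ori \<longleftrightarrow> (B, A) \<notin> Ori)"
proof -
  assume a: "adjacent G Gl A B"
  have "\<forall>A B. adjacent G Gl A B \<longrightarrow> ((A, B) \<in> Ori \<longleftrightarrow> (B, A) \<notin> Ori)"
    using ori unfolding orientation_def by (elim conjE)
  then show ?thesis using a by blast
qed

lemma ori_sq: "A \<in> carrier G \<Longrightarrow> (s, t) \<in> I \<Longrightarrow> s \<noteq> t \<Longrightarrow>
   ((A, s \<otimes> A) \<in> Ori \<longleftrightarrow> (t \<otimes> A, s \<otimes> (t \<otimes> A)) \<in> Ori)"
proof -
  assume a: "A \<in> carrier G" "(s, t) \<in> I" "s \<noteq> t"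
  have "\<forall>A\<in>carrier G. \<forall>p\<in>I. case p of (s, t) \<Rightarrow> s \<noteq> t \<longrightarrow>
        ((A, s \<otimes> A) \<in> Ori \<longleftrightarrow> (t \<otimes> A, s \<otimes> (t \<otimes> A)) \<in> Ori)"
    using ori unfolding orientation_def by (elim conjE)
  from bspec[OF bspec[OF this a(1)] a(2)] show ?thesis using a(3) by simp
qed

lemma backtrack_lab:
  assumes "adjacent G Gl v w" "adjacent G Gl w x" "lab G Ori w x = linv (lab G Ori v w)"
  shows "x = v"
proof -
  have c: "v \<in> carrier G" "w \<in> carrier G" "x \<in> carrier G" using assms unfolding adjacent_def by auto
  show ?thesis
  proof (cases "(v, w) \<in> Ori")
    case True
    then have "(w, x) \<notin> Ori" "w \<otimes> inv x = w \<otimes> inv v" using assms(3) unfolding lab_def linv_def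
      by (auto split: if_splits)
    then have "inv x = inv v" using c by simp
    then show ?thesis using c by (metis inv_inv)
  next
    case False
    then have "(w, x) \<in> Ori" "x \<otimes> inv w = v \<otimes> inv w" using assms(3) unfolding lab_def linv_def
      by (auto split: if_splits)
    then show ?thesis using c by simp
  qed
qed

lemma lift_unique:
  assumes "adjacent G Gl v w" "adjacent G Gl v w'" "lab G Ori v w = lab G Ori v w'"
  shows "w = w'"
proof -
  have c: "v \<in> carrier G" "w \<in> carrier G" "w' \<in> carrier G" using assms unfolding adjacent_def by auto
  show ?thesis
  proof (cases "(v, w) \<in> Ori")
    case True
    then have "w \<otimes> inv v = w' \<otimes> inv v" using assms(3) unfolding lab_def
      by (auto split: if_splits)
    then show ?thesis using c by simp
  next
    case False
    then have "v \<otimes> inv w = v \<otimes> inv w'" using assms(3) unfolding lab_def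
      by (auto split: if_splits)
    then have "inv w = inv w'" using c by simp
    then show ?thesis using c by (metis inv_inv)
  qed
qed

lemma fst_lab_I:
  assumes "a \<in> carrier G" "b \<in> carrier G" "(a', b') \<in> I" "a' = a \<or> a' = inv a" "b' = b \<or> b' = inv b"
  shows "(a, b) \<in> I"
proof -
  have "(a, b') \<in> I" using assms(3,4) I_props[of a' b'] assms(1) by auto
  then show ?thesis using assms(5) I_inv2[of a b'] assms(2) by auto
qed

lemma square_lab:
  assumes "adjacent G Gl v w" "adjacent G Gl w x" "CC I (lab G Ori v w) (lab G Ori w x)"
  shows "\<exists>w'. adjacent G Gl v w' \<and> adjacent G Gl w' x \<and> lab G Ori v w' = lab G Ori w x \<and>
     lab G Ori w' x = lab G Ori v w \<and> path_move G Gl I [v, w, x] [v, w', x]"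
proof -
  define s where "s = w \<otimes> inv v"
  define t where "t = x \<otimes> inv w"
  have c: "v \<in> carrier G" "w \<in> carrier G" "x \<in> carrier G" using assms unfolding adjacent_def by auto
  have sG: "s \<in> Gl" "t \<in> Gl" using assms unfolding adjacent_def s_def t_def by auto
  then have sc: "s \<in> carrier G" "t \<in> carrier G" using Gl_carrier by auto
  have w: "w = s \<otimes> v" using adj_mul[OF assms(1)] s_def by simp
  have x: "x = t \<otimes> w" using adj_mul[OF assms(2)] t_def by simp
  have l1: "lab G Ori v w = (if (v, w) \<in> Ori then (s, True) else (inv s, False))"
    using lab_mul[OF sc(1) c(1)] w by simp
  have l2: "lab G Ori w x = (if (w, x) \<in> Ori then (t, True) else (inv t, False))"
    using lab_mul[OF sc(2) c(2)] x by simp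
  have I1: "(fst (lab G Ori v w), fst (lab G Ori w x)) \<in> I" using assms(3) by (simp add: CC_def)
  have st: "(s, t) \<in> I"
    by (rule fst_lab_I[OF sc I1]) (auto simp: l1 l2)
  have ts: "(t, s) \<in> I" using I_props st by blast
  have sne: "s \<noteq> t" using st I_irr by auto
  have comm: "s \<otimes> t = t \<otimes> s" using I_props st by blast
  define w' where "w' = t \<otimes> v"
  have x2: "x = s \<otimes> w'" unfolding w'_def x w using comm sc c by (simp add: m_assoc[symmetric])
  have w'c: "w' \<in> carrier G" unfolding w'_def using sc c by simp
  have adj1: "adjacent G Gl v w'" unfolding adjacent_def w'_def using sc c sG by (simp add: m_assoc)
  have adj2: "adjacent G Gl w' x" unfolding adjacent_def x2 using sc w'c sG c by (simp add: m_assoc)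
  have o1: "(v, w) \<in> Ori \<longleftrightarrow> (w', x) \<in> Ori" using ori_sq[OF c(1) st sne] w x2 w'_def by simp
  have o2: "(v, w') \<in> Ori \<longleftrightarrow> (w, x) \<in> Ori" using ori_sq[OF c(1) ts sne[symmetric]] w x w'_def by simp
  have l3: "lab G Ori v w' = (if (v, w') \<in> Ori then (t, True) else (inv t, False))"
    using lab_mul[OF sc(2) c(1)] w'_def by simp
  have l4: "lab G Ori w' x = (if (w', x) \<in> Ori then (s, True) else (inv s, False))"
    using lab_mul[OF sc(1) w'c] x2 by simp
  have pm: "path_move G Gl I [v, w, x] [v, w', x]"
    using path_move.square[OF c(1) st sne, where xs="[]" and ys="[]"] w x x2 w'_def by simp
  show ?thesis
    by (rule exI[of _ w']) (use adj1 adj2 pm o1 o2 l1 l2 l3 l4 in auto)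
qed


end

sublocale glide_ctx \<subseteq> indep I by (rule glide_ctx.indep_I[OF glide_ctx_axioms])

context glide_ctx
begin

lemma swap_lift1:
  "edge_path G Gl (X # p) \<Longrightarrow> typing G Ori (X # p) = u @ [x, y] @ v \<Longrightarrow> CC I x y \<Longrightarrow>
   \<exists>p'. edge_path G Gl (X # p') \<and> typing G Ori (X # p') = u @ [y, x] @ v \<and> homotopic G Gl I (X # p) (X # p')"
proof (induction u arbitrary: X p)
  case Nil
  obtain Y Z p2 where p: "p = Y # Z # p2"
    using Nil.prems(2) by (cases p; cases "tl p") (auto simp: typing_Cons2)
  have e: "adjacent G Gl X Y" "adjacent G Gl Y Z" "edge_path G Gl (Z # p2)" using Nil.prems(1) p by auto
  have l: "x = lab G Ori X Y" "y = lab G Ori Y Z" "v = typing G Ori (Z # p2)"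
    using Nil.prems(2) p by (auto simp: typing_Cons2)
  obtain Y' where Y': "adjacent G Gl X Y'" "adjacent G Gl Y' Z" "lab G Ori X Y' = lab G Ori Y Z"
     "lab G Ori Y' Z = lab G Ori X Y" "path_move G Gl I [X, Y, Z] [X, Y', Z]"
    using square_lab[OF e(1,2)] Nil.prems(3) l by blast
  have "homotopic G Gl I ([] @ [X, Y, Z] @ p2) ([] @ [X, Y', Z] @ p2)"
    using homotopic_cong[OF homotopic_move[OF Y'(5)]] by blast
  then show ?case using Y' e l p by (intro exI[of _ "Y' # Z # p2"]) (auto simp: typing_Cons2)
next
  case (Cons z u)
  obtain Y p1 where p: "p = Y # p1" using Cons.prems(2) by (cases p) auto
  have e: "adjacent G Gl X Y" "edge_path G Gl (Y # p1)" using Cons.prems(1) p by auto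
  have t: "typing G Ori (Y # p1) = u @ [x, y] @ v" "z = lab G Ori X Y"
    using Cons.prems(2) p by (auto simp: typing_Cons2)
  obtain p1' where "edge_path G Gl (Y # p1')" "typing G Ori (Y # p1') = u @ [y, x] @ v"
    "homotopic G Gl I (Y # p1) (Y # p1')" using Cons.IH[OF e(2) t(1) Cons.prems(3)] by blast
  then show ?case using e t p by (intro exI[of _ "Y # p1'"]) (auto simp: typing_Cons2 homotopic_Cons)
qed

lemma eqv_lift:
  "equivclp (swap1 I) (typing G Ori (X # p)) w' \<Longrightarrow> edge_path G Gl (X # p) \<Longrightarrow>
   \<exists>p'. edge_path G Gl (X # p') \<and> typing G Ori (X # p') = w' \<and> homotopic G Gl I (X # p) (X # p')"
proof (induction rule: equivclp_induct)
  case base then show ?case by (intro exI[of _ p]) (simp add: homotopic_def)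
next
  case (step y z)
  obtain p2 where p2: "edge_path G Gl (X # p2)" "typing G Ori (X # p2) = y" "homotopic G Gl I (X # p) (X # p2)"
    using step.IH step.prems by blast
  have "swap1 I y z" using step.hyps(2) swap1_sym' by blast
  then obtain u a b v where "CC I a b" "y = u @ [a, b] @ v" "z = u @ [b, a] @ v"
    by (cases rule: swap1.cases) blast
  then obtain p3 where "edge_path G Gl (X # p3)" "typing G Ori (X # p3) = z" "homotopic G Gl I (X # p2) (X # p3)"
    using swap_lift1[OF p2(1)] p2(2) by blast
  then show ?case using p2(3) homotopic_trans by blast
qed

lemma Phi_lift:
  "edge_path G Gl (X # p) \<Longrightarrow>
   \<exists>p'. edge_path G Gl (X # p') \<and> typing G Ori (X # p') = foldr (ff I) (typing G Ori (X # p)) [] \<and>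
        homotopic G Gl I (X # p) (X # p')"
proof (induction p arbitrary: X)
  case Nil then show ?case by (intro exI[of _ "[]"]) (simp add: homotopic_def)
next
  case (Cons Y p1)
  have e: "adjacent G Gl X Y" "edge_path G Gl (Y # p1)" using Cons.prems by auto
  define a where "a = lab G Ori X Y"
  obtain p1' where p1': "edge_path G Gl (Y # p1')" "typing G Ori (Y # p1') = foldr (ff I) (typing G Ori (Y # p1)) []"
    "homotopic G Gl I (Y # p1) (Y # p1')" using Cons.IH[OF e(2)] by blast
  define z where "z = foldr (ff I) (typing G Ori (Y # p1)) []"
  have fz: "foldr (ff I) (typing G Ori (X # Y # p1)) [] = ff I a z"
    by (simp add: typing_Cons2 a_def z_def)
  have h1: "homotopic G Gl I (X # Y # p1) (X # Y # p1')" using homotopic_Cons[OF p1'(3)] .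
  show ?case
  proof (cases "red1 I a z")
    case None
    then have "ff I a z = a # z" by (simp add: ff_def)
    then show ?thesis using p1' e h1 fz
      by (intro exI[of _ "Y # p1'"]) (auto simp: typing_Cons2 a_def z_def)
  next
    case (Some r)
    then obtain u v where uv: "z = u @ [linv a] @ v" "\<forall>x\<in>set u. CC I a x" "r = u @ v"
      using red1_Some by blast
    have ffz: "ff I a z = u @ v" using Some uv by (simp add: ff_def)
    have "equivclp (swap1 I) z (linv a # u @ v)" using move_front[of u "linv a" v] uv by simp
    then obtain p2 where p2: "edge_path G Gl (Y # p2)" "typing G Ori (Y # p2) = linv a # u @ v"
      "homotopic G Gl I (Y # p1') (Y # p2)"
      using eqv_lift[of Y p1'] p1' z_def by auto
    obtain Z p3 where p3: "p2 = Z # p3" using p2(2) by (cases p2) auto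
    have ad: "adjacent G Gl Y Z" "edge_path G Gl (Z # p3)" using p2(1) p3 by auto
    have "lab G Ori Y Z = linv a" "typing G Ori (Z # p3) = u @ v"
      using p2(2) p3 by (auto simp: typing_Cons2)
    then have ZX: "Z = X" using backtrack_lab[OF e(1) ad(1)] a_def by simp
    have "path_move G Gl I ([] @ [X, Y, X] @ p3) ([] @ [X] @ p3)"
      using e(1) by (rule path_move.backtrack)
    then have h3: "homotopic G Gl I (X # Y # X # p3) (X # p3)" using homotopic_move by simp
    have h2: "homotopic G Gl I (X # Y # p1') (X # Y # X # p3)" using homotopic_Cons[OF p2(3), of X] p3 ZX by simp
    show ?thesis
    proof (intro exI[of _ p3] conjI)
      show "edge_path G Gl (X # p3)" using ad ZX by simp
      show "typing G Ori (X # p3) = foldr (ff I) (typing G Ori (X # Y # p1)) []"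
        using \<open>typing G Ori (Z # p3) = u @ v\<close> ZX ffz fz by simp
      show "homotopic G Gl I (X # Y # p1) (X # p3)"
        using homotopic_trans[OF homotopic_trans[OF h1 h2] h3] .
    qed
  qed
qed

lemma path_unique:
  "edge_path G Gl (X # p) \<Longrightarrow> edge_path G Gl (X # q) \<Longrightarrow> typing G Ori (X # p) = typing G Ori (X # q) \<Longrightarrow> p = q"
proof (induction p arbitrary: X q)
  case Nil then show ?case by (cases q) (auto simp: typing_Cons2)
next
  case (Cons Y p1)
  obtain Y' q1 where q: "q = Y' # q1" using Cons.prems(3) by (cases q) (auto simp: typing_Cons2)
  have "lab G Ori X Y = lab G Ori X Y'" "typing G Ori (Y # p1) = typing G Ori (Y' # q1)"
    using Cons.prems(3) q by (auto simp: typing_Cons2)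
  moreover have "adjacent G Gl X Y" "adjacent G Gl X Y'" using Cons.prems q by auto
  ultimately have "Y = Y'" using lift_unique by blast
  then show ?case using Cons.IH[of Y q1] Cons.prems q \<open>typing G Ori (Y # p1) = typing G Ori (Y' # q1)\<close> by auto
qed

lemma main:
  assumes "edge_path G Gl p" "hd p = A" "edge_path G Gl q" "hd q = A"
    and "raag_eq Gl I (typing G Ori p) (typing G Ori q)"
  shows "homotopic G Gl I p q"
proof -
  obtain p0 where p: "p = A # p0" using assms(1,2) by (cases p) auto
  obtain q0 where q: "q = A # q0" using assms(3,4) by (cases q) auto
  obtain p' where p': "edge_path G Gl (A # p')" "typing G Ori (A # p') = foldr (ff I) (typing G Ori p) []"
    "homotopic G Gl I p (A # p')" using Phi_lift[of A p0] assms(1) p by blast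
  obtain q' where q': "edge_path G Gl (A # q')" "typing G Ori (A # q') = foldr (ff I) (typing G Ori q) []"
    "homotopic G Gl I q (A # q')" using Phi_lift[of A q0] assms(3) q by blast
  have "equivclp (swap1 I) (foldr (ff I) (typing G Ori q) []) (foldr (ff I) (typing G Ori p) [])"
    using Phi_eq[OF assms(5)] unfolding Phi_def by (rule equivclp_sym)
  then obtain q'' where q'': "edge_path G Gl (A # q'')" "typing G Ori (A # q'') = foldr (ff I) (typing G Ori p) []"
    "homotopic G Gl I (A # q') (A # q'')" using eqv_lift[of A q'] q' by auto
  have "q'' = p'" using path_unique[OF q''(1) p'(1)] q''(2) p'(2) by simp
  then show ?thesis using p'(3) q'(3) q''(3) homotopic_trans homotopic_sym by metis
qed

end


theorem corollary5p5:
  fixes G :: "('a, 'b) monoid_scheme"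
    and Gl :: "'a set" and I :: "('a \<times> 'a) set" and Ori :: "('a \<times> 'a) set"
  assumes "group G"
    and "gliding_system G Gl I"
    and "regular_gliding G Gl I"
    and "\<exists>N::nat. \<forall>S. pairwise_indep Gl I S \<longrightarrow> finite S \<and> card S \<le> N"
    and "orientation G Gl I Ori"
    and "A \<in> carrier G"
  shows "\<forall>p q. loop_at G Gl A p \<longrightarrow> loop_at G Gl A q \<longrightarrow>
           raag_eq Gl I (typing G Ori p) (typing G Ori q) \<longrightarrow> homotopic G Gl I p q"
proof -
  interpret glide_ctx G Gl I Ori
    by (intro glide_ctx.intro glide_ctx_axioms.intro) (use assms in auto)
  show ?thesis
    unfolding loop_at_def using main by blast
qed

end
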